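(* Let $K$ be a finite extension of $\mathbb Q$, $\mathcal O$ its ring of integers, $B\subset\mathcal O$ an order, $S\subset B$ a multiplicatively closed subset and $A=B_S$. Let $\mu:A^2\to U(k)$ be a finite-dimensional unitary representation of the additive group $A^2$ whose character is $SL(2,A)$-invariant, i.e. $\mathrm{tr}\,\mu(g.t)=\mathrm{tr}\,\mu(t)$ for all $g\in SL(2,A)$, $t\in A^2$ (with $SL(2,A)$ acting on $A^2$ by matrix multiplication). Then there exists a nonzero $q\in\mathbb N$ such that $\mu$ is trivial on $(qA)^2$, i.e. $\mu$ factors through $(A/qA)^2$. *)

theory Defs
  imports "HOL-Analysis.Analysis" "HOL-Computational_Algebra.Polynomial"
begin

text \<open>Number fields are realised as subfields of the complex numbers.\<close>

definition subfield_C :: "complex set \<Rightarrow> bool" where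
  "subfield_C K \<longleftrightarrow> 0 \<in> K \<and> 1 \<in> K \<and>
     (\<forall>x\<in>K. \<forall>y\<in>K. x + y \<in> K \<and> x - y \<in> K \<and> x * y \<in> K) \<and>
     (\<forall>x\<in>K. x \<noteq> 0 \<longrightarrow> inverse x \<in> K)"

definition number_field :: "complex set \<Rightarrow> bool" where
  "number_field K \<longleftrightarrow> subfield_C K \<and>
     (\<exists>bs::complex list. set bs \<subseteq> K \<and>
        (\<forall>x\<in>K. \<exists>c::nat \<Rightarrow> rat. x = (\<Sum>i<length bs. of_rat (c i) * bs ! i)))"

definition ring_of_integers :: "complex set \<Rightarrow> complex set" where
  "ring_of_integers K = {x \<in> K. algebraic_int x}"

definition subring_C :: "complex set \<Rightarrow> bool" where
  "subring_C B \<longleftrightarrow> 1 \<in> B \<and> (\<forall>x\<in>B. \<forall>y\<in>B. x + y \<in> B \<and> x - y \<in> B \<and> x * y \<in> B)"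

definition is_order :: "complex set \<Rightarrow> complex set \<Rightarrow> bool" where
  "is_order K B \<longleftrightarrow> subring_C B \<and> B \<subseteq> ring_of_integers K \<and>
     (\<exists>F. finite F \<and> (\<forall>x\<in>ring_of_integers K. \<exists>f\<in>F. x - f \<in> B))"

definition mult_closed :: "complex set \<Rightarrow> bool" where
  "mult_closed S \<longleftrightarrow> 1 \<in> S \<and> (\<forall>x\<in>S. \<forall>y\<in>S. x * y \<in> S)"

text \<open>Localisation B_S inside K (for 0 not in S).\<close>
definition localization :: "complex set \<Rightarrow> complex set \<Rightarrow> complex set" where
  "localization B S = {b / s | b s. b \<in> B \<and> s \<in> S}"

definition conj_transpose :: "complex^'k^'k \<Rightarrow> complex^'k^'k" where
  "conj_transpose U = (\<chi> i j. cnj (U $ j $ i))"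

definition unitary_mat :: "complex^'k^'k \<Rightarrow> bool" where
  "unitary_mat U \<longleftrightarrow> U ** conj_transpose U = mat 1 \<and> conj_transpose U ** U = mat 1"

definition SL2 :: "complex set \<Rightarrow> ((complex \<times> complex) \<times> (complex \<times> complex)) set" where
  "SL2 A = {((a,b),(c,d)). a \<in> A \<and> b \<in> A \<and> c \<in> A \<and> d \<in> A \<and> a * d - b * c = 1}"

fun SL2_act :: "(complex \<times> complex) \<times> (complex \<times> complex) \<Rightarrow> complex \<times> complex \<Rightarrow> complex \<times> complex" where
  "SL2_act ((a,b),(c,d)) (x,y) = (a * x + b * y, c * x + d * y)"

end

theory Submission
  imports Defs "HOL-Computational_Algebra.Fundamental_Theorem_Algebra"
begin


definition pv :: "complex poly \<Rightarrow> complex^'k^'k \<Rightarrow> complex^'k \<Rightarrow> complex^'k" where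
  "pv p M w = (\<Sum>i\<le>degree p. coeff p i *s (((*v) M) ^^ i) w)"

lemma pv_upto:
  assumes "degree p \<le> N"
  shows "pv p M w = (\<Sum>i\<le>N. coeff p i *s (((*v) M) ^^ i) w)"
  unfolding pv_def
  by (rule sum.mono_neutral_left) (use assms in \<open>auto simp: coeff_eq_0\<close>)

lemma pv_lin_factor:
  "pv ([:-c,1:] * r) M w = M *v pv r M w - c *s pv r M w"
proof -
  let ?X = "\<lambda>i. (((*v) M) ^^ i) w"
  let ?N = "Suc (degree r)"
  have d: "degree ([:-c,1:] * r) \<le> ?N"
    by (metis degree_mult_le degree_linear_power le_refl power_one_right add.commute plus_1_eq_Suc order_trans)
  have e: "\<And>i. coeff ([:-c,1:] * r) i = coeff (pCons 0 r) i - c * coeff r i" by simp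
  have "pv ([:-c,1:] * r) M w = (\<Sum>i\<le>?N. coeff (pCons 0 r) i *s ?X i) - c *s (\<Sum>i\<le>?N. coeff r i *s ?X i)"
    unfolding pv_upto[OF d] e
    by (simp add: vector_sub_rdistrib sum_subtractf vec.scale_sum_right vector_smult_assoc)
  also have "(\<Sum>i\<le>?N. coeff (pCons 0 r) i *s ?X i) = (\<Sum>i\<le>degree r. coeff r i *s ?X (Suc i))"
    by (subst sum.atMost_Suc_shift) simp
  also have "\<dots> = M *v pv r M w"
    by (simp add: pv_def vec.sum vec.scale)
  also have "(\<Sum>i\<le>?N. coeff r i *s ?X i) = pv r M w"
    by (rule pv_upto[symmetric]) simp
  finally show ?thesis .
qed

lemma iter_in:
  assumes "\<forall>x\<in>W. M *v x \<in> W" "w \<in> W"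
  shows "(((*v) M) ^^ i) w \<in> W"
  using assms by (induction i) auto

lemma pv_in:
  assumes "vec.subspace W" "\<forall>x\<in>W. M *v x \<in> W" "w \<in> W"
  shows "pv p M w \<in> W"
  unfolding pv_def
  by (intro vec.subspace_sum[OF assms(1)] ballI vec.subspace_scale[OF assms(1)] iter_in[OF assms(2,3)])

lemma eig_from_poly:
  assumes "vec.subspace W" "\<forall>x\<in>W. M *v x \<in> W" "w \<in> W" "w \<noteq> 0"
  shows "p \<noteq> 0 \<Longrightarrow> pv p M w = 0 \<Longrightarrow> \<exists>l u. u \<in> W \<and> u \<noteq> 0 \<and> M *v u = l *s u"
proof (induction "degree p" arbitrary: p rule: less_induct)
  case less
  show ?case
  proof (cases "degree p = 0")
    case True
    then obtain a where "p = [:a:]" by (metis degree_eq_zeroE)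
    with less.prems have "a \<noteq> 0" "a *s w = 0" by (auto simp: pv_def)
    with assms(4) show ?thesis by (simp add: vec.scale_eq_0_iff)
  next
    case False
    then have "\<not> constant (poly p)" by (simp add: constant_degree)
    then obtain z where "poly p z = 0" using fundamental_theorem_of_algebra by blast
    then obtain r where r: "p = [:-z,1:] * r" by (metis poly_eq_0_iff_dvd dvdE)
    with less.prems have r0: "r \<noteq> 0" by auto
    have "degree p = degree [:-z,1:] + degree r" unfolding r by (rule degree_mult_eq) (use r0 in auto)
    then have dr: "degree r < degree p" by simp
    let ?u = "pv r M w"
    show ?thesis
    proof (cases "?u = 0")
      case True
      from less.hyps[OF dr r0 True] show ?thesis .
    next
      case False
      have "M *v ?u - z *s ?u = 0" using less.prems(2) unfolding r pv_lin_factor .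
      then have "M *v ?u = z *s ?u" by simp
      with False pv_in[OF assms(1-3)] show ?thesis by blast
    qed
  qed
qed

lemma pv_monoms:
  "pv (\<Sum>i\<le>N. monom (c i) i) M w = (\<Sum>i\<le>N. c i *s (((*v) M) ^^ i) w)"
proof -
  have d: "degree (\<Sum>i\<le>N. monom (c i) i) \<le> N"
    by (rule degree_sum_le) (auto intro: order_trans[OF degree_monom_le])
  have co: "coeff (\<Sum>i\<le>N. monom (c i) i) l = (if l \<le> N then c l else 0)" for l
    by (simp add: coeff_sum coeff_monom)
  show ?thesis unfolding pv_upto[OF d] co by simp
qed

lemma monoms_nz:
  assumes "j \<le> N" "c j \<noteq> 0"
  shows "(\<Sum>i\<le>N. monom (c i) i) \<noteq> 0"
proof
  assume "(\<Sum>i\<le>N. monom (c i) i) = 0"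
  then have "coeff (\<Sum>i\<le>N. monom (c i) i) j = 0" by simp
  with assms show False by (simp add: coeff_sum coeff_monom)
qed

lemma eig_exists:
  fixes M :: "complex^'k^'k"
  assumes "vec.subspace W" "\<forall>x\<in>W. M *v x \<in> W" "w \<in> W" "w \<noteq> 0"
  shows "\<exists>l u. u \<in> W \<and> u \<noteq> 0 \<and> M *v u = l *s u"
proof -
  let ?X = "\<lambda>i. (((*v) M) ^^ i) w"
  let ?N = "CARD('k)"
  have "\<exists>c. (\<exists>j\<le>?N. c j \<noteq> 0) \<and> (\<Sum>i\<le>?N. c i *s ?X i) = 0"
  proof (cases "inj_on ?X {..?N}")
    case False
    then obtain i j where ij: "i \<le> ?N" "j \<le> ?N" "i < j" "?X i = ?X j"
      unfolding inj_on_def by (metis atMost_iff linorder_neqE_nat)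
    let ?c = "\<lambda>l. (if l = j then 1 else 0) - (if l = i then 1 else (0::complex))"
    have "(\<Sum>l\<le>?N. ?c l *s ?X l) = (\<Sum>l\<le>?N. (if l = j then ?X l else 0)) - (\<Sum>l\<le>?N. (if l = i then ?X l else 0))"
      by (simp add: vector_sub_rdistrib sum_subtractf if_distrib[of "\<lambda>a. a *s _"] cong: if_cong)
    also have "\<dots> = 0" using ij by simp
    finally show ?thesis using ij by (intro exI[of _ ?c]) auto
  next
    case True
    let ?S = "?X ` {..?N}"
    have cS: "card ?S = Suc ?N" using True by (simp add: card_image)
    have "vec.dim ?S \<le> ?N"
      using vec.dim_subset[of ?S UNIV] by (simp add: card_cart_basis)
    then have "vec.dependent ?S"
      using cS by (intro vec.dependent_biggerset_general) simp
    then obtain u where u: "\<exists>v\<in>?S. u v \<noteq> 0" "(\<Sum>v\<in>?S. u v *s v) = 0"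
      using vec.dependent_finite[of ?S] by auto
    have "(\<Sum>i\<le>?N. u (?X i) *s ?X i) = (\<Sum>v\<in>?S. u v *s v)"
      using sum.reindex[OF True, of "\<lambda>v. u v *s v"] by simp
    with u show ?thesis by (intro exI[of _ "\<lambda>i. u (?X i)"]) auto
  qed
  then obtain c j where c: "j \<le> ?N" "c j \<noteq> 0" "(\<Sum>i\<le>?N. c i *s ?X i) = 0" by blast
  show ?thesis
    by (rule eig_from_poly[OF assms monoms_nz[of j _ c, OF c(1,2)]]) (simp add: pv_monoms c(3))
qed

lemma common_eig:
  fixes F :: "(complex^'k^'k) set"
  assumes comm: "\<forall>A\<in>F. \<forall>B\<in>F. A ** B = B ** A"
  shows "vec.subspace W \<Longrightarrow> \<forall>M\<in>F. \<forall>x\<in>W. M *v x \<in> W \<Longrightarrow> W \<noteq> {0} \<Longrightarrow>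
     \<exists>v\<in>W. v \<noteq> 0 \<and> (\<forall>M\<in>F. \<exists>l. M *v v = l *s v)"
proof (induction "vec.dim W" arbitrary: W rule: less_induct)
  case less
  have "\<exists>w\<in>W. w \<noteq> 0" using less.prems(3) vec.subspace_0[OF less.prems(1)] by blast
  then obtain w where w: "w \<in> W" "w \<noteq> 0" by blast
  show ?case
  proof (cases "\<forall>M\<in>F. \<exists>l. \<forall>x\<in>W. M *v x = l *s x")
    case True
    then show ?thesis using w by blast
  next
    case False
    then obtain M where M: "M \<in> F" "\<forall>l. \<exists>x\<in>W. M *v x \<noteq> l *s x" by blast
    obtain l u where u: "u \<in> W" "u \<noteq> 0" "M *v u = l *s u"
      using eig_exists[OF less.prems(1) _ w] less.prems(2) M(1) by blast
    define W' where "W' = {x\<in>W. M *v x = l *s x}"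
    have sW': "vec.subspace W'"
      unfolding vec.subspace_def W'_def using less.prems(1)
      by (auto simp: vec.subspace_def vec.add vec.scale vector_add_ldistrib mult.commute)
    have "W' \<subseteq> W" by (auto simp: W'_def)
    moreover have "W' \<noteq> W"
    proof
      assume "W' = W"
      then have "\<forall>x\<in>W. M *v x = l *s x" unfolding W'_def by blast
      with M(2) show False by blast
    qed
    ultimately have "vec.span W' \<subset> vec.span W"
    proof -
      have eqs: "vec.span W' = W'" "vec.span W = W"
        using vec.span_eq_iff[of W'] vec.span_eq_iff[of W] sW' less.prems(1) by blast+
      show ?thesis unfolding eqs using \<open>W' \<subseteq> W\<close> \<open>W' \<noteq> W\<close> by blast
    qed
    then have dlt: "vec.dim W' < vec.dim W" by (rule vec.dim_psubset)
    have inv: "\<forall>N\<in>F. \<forall>x\<in>W'. N *v x \<in> W'"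
    proof (intro ballI)
      fix N x assume N: "N \<in> F" and x: "x \<in> W'"
      have "M *v (N *v x) = N *v (M *v x)"
        by (simp add: matrix_vector_mul_assoc comm N M(1))
      also have "\<dots> = l *s (N *v x)" using x by (simp add: W'_def vec.scale)
      finally show "N *v x \<in> W'" using x less.prems(2) N by (auto simp: W'_def)
    qed
    have "W' \<noteq> {0}" using u by (auto simp: W'_def)
    from less.hyps[OF dlt sW' inv this] show ?thesis using \<open>W' \<subseteq> W\<close> by blast
  qed
qed

definition hp :: "complex^'k \<Rightarrow> complex^'k \<Rightarrow> complex" where
  "hp u w = (\<Sum>i\<in>UNIV. u$i * cnj (w$i))"

lemma hp_add_left: "hp (u + v) w = hp u w + hp v w"
  by (simp add: hp_def distrib_right sum.distrib)
lemma hp_diff_left: "hp (u - v) w = hp u w - hp v w"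
  by (simp add: hp_def left_diff_distrib sum_subtractf)
lemma hp_scale_left: "hp (c *s u) w = c * hp u w"
  by (simp add: hp_def sum_distrib_left mult.assoc)
lemma hp_scale_right: "hp u (c *s w) = cnj c * hp u w"
  by (simp add: hp_def sum_distrib_left algebra_simps)
lemma hp_cnj: "cnj (hp u w) = hp w u"
  by (simp add: hp_def mult.commute)
lemma hp_zero_left[simp]: "hp 0 w = 0"
  by (simp add: hp_def)
lemma hp_sum_left: "finite E \<Longrightarrow> hp (\<Sum>e\<in>E. f e) w = (\<Sum>e\<in>E. hp (f e) w)"
  by (induction E rule: finite_induct) (auto simp: hp_add_left)
lemma hp_self: "hp u u = of_real (\<Sum>i\<in>UNIV. (cmod (u$i))^2)"
proof -
  have "of_real ((cmod (u$i))^2) = u$i * cnj (u$i)" for i by (rule complex_norm_square)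
  then show ?thesis unfolding hp_def of_real_sum by simp
qed
lemma hp_self_pos: "u \<noteq> 0 \<Longrightarrow> (\<Sum>i\<in>UNIV. (cmod (u$i))^2) > 0"
proof -
  assume "u \<noteq> 0"
  then obtain i where "u$i \<noteq> 0" using vec_eq_iff[of u 0] by auto
  then have "(cmod (u$i))^2 > 0" by simp
  moreover have "(cmod (u$i))^2 \<le> (\<Sum>i\<in>UNIV. (cmod (u$i))^2)"
    by (rule member_le_sum) auto
  ultimately show ?thesis by linarith
qed
lemma hp_adj: "hp (M *v u) w = hp u (conj_transpose M *v w)"
proof -
  have "hp (M *v u) w = (\<Sum>i\<in>UNIV. \<Sum>j\<in>UNIV. M$i$j * u$j * cnj (w$i))"
    by (simp add: hp_def matrix_vector_mult_def sum_distrib_right)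
  also have "\<dots> = (\<Sum>j\<in>UNIV. \<Sum>i\<in>UNIV. M$i$j * u$j * cnj (w$i))" by (rule sum.swap)
  also have "\<dots> = hp u (conj_transpose M *v w)"
    by (simp add: hp_def matrix_vector_mult_def conj_transpose_def sum_distrib_left mult_ac)
  finally show ?thesis .
qed

definition jeig :: "(complex^'k^'k) set \<Rightarrow> complex^'k \<Rightarrow> bool" where
  "jeig F v \<longleftrightarrow> (\<forall>M\<in>F. \<exists>l. M *v v = l *s v)"

lemma onb:
  fixes F :: "(complex^'k^'k) set"
  assumes comm: "\<forall>A\<in>F. \<forall>B\<in>F. A ** B = B ** A"
    and adj: "\<forall>M\<in>F. conj_transpose M \<in> F"
  shows "vec.subspace W \<Longrightarrow> \<forall>M\<in>F. \<forall>x\<in>W. M *v x \<in> W \<Longrightarrow>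
     \<exists>E. finite E \<and> E \<subseteq> W \<and> (\<forall>e\<in>E. hp e e = 1) \<and> (\<forall>e\<in>E. \<forall>e'\<in>E. e \<noteq> e' \<longrightarrow> hp e e' = 0)
        \<and> (\<forall>e\<in>E. jeig F e) \<and> W \<subseteq> vec.span E"
proof (induction "vec.dim W" arbitrary: W rule: less_induct)
  case less
  show ?case
  proof (cases "W = {0}")
    case True
    then show ?thesis by (intro exI[of _ "{}"]) auto
  next
    case False
    obtain v where v: "v \<in> W" "v \<noteq> 0" "jeig F v"
      using common_eig[OF comm less.prems(1,2) False] unfolding jeig_def by blast
    define s where "s = (\<Sum>i\<in>UNIV. (cmod (v$i))^2)"
    have s: "s > 0" using hp_self_pos[OF v(2)] by (simp add: s_def)
    define e where "e = complex_of_real (1 / sqrt s) *s v"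
    have hv: "hp v v = of_real s" unfolding s_def by (rule hp_self)
    have "hp e e = cnj (of_real (1 / sqrt s)) * (of_real (1 / sqrt s) * hp v v)"
      unfolding e_def hp_scale_left hp_scale_right ..
    also have "\<dots> = of_real (1 / sqrt s) * (of_real (1 / sqrt s) * of_real s)"
      unfolding hv Complex.complex_cnj_complex_of_real ..
    also have "\<dots> = of_real (1 / sqrt s * (1 / sqrt s) * s)" by (simp only: of_real_mult mult.assoc)
    also have "1 / sqrt s * (1 / sqrt s) * s = 1"
    proof -
      have "sqrt s * sqrt s = s" using s by simp
      then show ?thesis using s by (simp add: divide_simps)
    qed
    finally have ee: "hp e e = 1" by simp
    have eW: "e \<in> W" unfolding e_def by (rule vec.subspace_scale[OF less.prems(1) v(1)])
    have je: "jeig F e"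
      unfolding jeig_def
    proof
      fix M assume "M \<in> F"
      then obtain l where "M *v v = l *s v" using v(3) unfolding jeig_def by blast
      then have "M *v e = l *s e" unfolding e_def vec.scale vector_smult_assoc by (simp add: mult.commute)
      then show "\<exists>l. M *v e = l *s e" ..
    qed
    define W' where "W' = {x\<in>W. hp x e = 0}"
    have sW': "vec.subspace W'"
      unfolding vec.subspace_def W'_def
      using vec.subspace_0[OF less.prems(1)] vec.subspace_add[OF less.prems(1)] vec.subspace_scale[OF less.prems(1)]
      by (simp add: hp_add_left hp_scale_left)
    have "W' \<subseteq> W" by (auto simp: W'_def)
    moreover have "e \<notin> W'" using ee by (simp add: W'_def)
    ultimately have "vec.span W' \<subset> vec.span W"
    proof -
      have eqs: "vec.span W' = W'" "vec.span W = W"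
        using vec.span_eq_iff[of W'] vec.span_eq_iff[of W] sW' less.prems(1) by blast+
      show ?thesis unfolding eqs using \<open>W' \<subseteq> W\<close> \<open>e \<notin> W'\<close> eW by blast
    qed
    then have dlt: "vec.dim W' < vec.dim W" by (rule vec.dim_psubset)
    have inv: "\<forall>M\<in>F. \<forall>x\<in>W'. M *v x \<in> W'"
    proof (intro ballI)
      fix M x assume M: "M \<in> F" and x: "x \<in> W'"
      obtain l where l: "conj_transpose M *v e = l *s e" using je adj M unfolding jeig_def by blast
      have "hp (M *v x) e = 0" using x by (simp add: hp_adj l hp_scale_right W'_def)
      then show "M *v x \<in> W'" using x less.prems(2) M by (auto simp: W'_def)
    qed
    obtain E' where E': "finite E'" "E' \<subseteq> W'" "\<forall>e\<in>E'. hp e e = 1"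
      "\<forall>e\<in>E'. \<forall>e'\<in>E'. e \<noteq> e' \<longrightarrow> hp e e' = 0" "\<forall>e\<in>E'. jeig F e" "W' \<subseteq> vec.span E'"
      using less.hyps[OF dlt sW' inv] by blast
    have orth1: "\<forall>e'\<in>E'. hp e' e = 0" using E'(2) by (auto simp: W'_def)
    have orth2: "\<forall>e'\<in>E'. hp e e' = 0" using orth1 hp_cnj by (metis complex_cnj_zero)
    have span: "W \<subseteq> vec.span (insert e E')"
    proof
      fix x assume x: "x \<in> W"
      have "x - hp x e *s e \<in> W'"
        using x eW less.prems(1) ee
        by (simp add: W'_def hp_diff_left hp_scale_left vec.subspace_diff vec.subspace_scale)
      then have "x - hp x e *s e \<in> vec.span (insert e E')"
        using E'(6) vec.span_mono[of E' "insert e E'"] by auto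
      moreover have "hp x e *s e \<in> vec.span (insert e E')"
        by (simp add: vec.span_base vec.span_scale)
      ultimately have "(x - hp x e *s e) + hp x e *s e \<in> vec.span (insert e E')"
        by (rule vec.span_add)
      then show "x \<in> vec.span (insert e E')" by simp
    qed
    have "insert e E' \<subseteq> W" using E'(2) eW \<open>W' \<subseteq> W\<close> by blast
    moreover have "\<forall>x\<in>insert e E'. \<forall>y\<in>insert e E'. x \<noteq> y \<longrightarrow> hp x y = 0"
      using E'(4) orth1 orth2 by blast
    moreover have "\<forall>x\<in>insert e E'. hp x x = 1" using E'(3) ee by blast
    moreover have "\<forall>x\<in>insert e E'. jeig F x" using E'(5) je by blast
    ultimately show ?thesis using E'(1) span by blast
  qed
qed



lemma if01_mult: "(if P then 1 else 0) * (x::complex) = (if P then x else 0)"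
  "x * (if P then 1 else 0) = (if P then x else 0)" by simp_all

lemma onb_expand:
  fixes E :: "(complex^'k) set"
  assumes fin: "finite E" and nrm: "\<forall>e\<in>E. hp e e = 1"
    and orth: "\<forall>e\<in>E. \<forall>e'\<in>E. e \<noteq> e' \<longrightarrow> hp e e' = 0" and sp: "UNIV \<subseteq> vec.span E"
  shows "x = (\<Sum>e\<in>E. hp x e *s e)"
proof -
  have "x \<in> vec.span E" using sp by blast
  then obtain u where u: "x = (\<Sum>v\<in>E. u v *s v)" using vec.span_finite[OF fin] by auto
  have "hp x e' = u e'" if e': "e' \<in> E" for e'
  proof -
    have "hp x e' = (\<Sum>v\<in>E. u v * hp v e')" unfolding u by (simp add: hp_sum_left fin hp_scale_left)
    also have "\<dots> = (\<Sum>v\<in>E. if v = e' then u v else 0)"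
      by (rule sum.cong) (use nrm orth e' in auto)
    also have "\<dots> = u e'" using fin e' by simp
    finally show ?thesis .
  qed
  then show ?thesis using u by (metis (no_types, lifting) sum.cong)
qed

lemma onb_delta:
  fixes E :: "(complex^'k) set"
  assumes fin: "finite E" and nrm: "\<forall>e\<in>E. hp e e = 1"
    and orth: "\<forall>e\<in>E. \<forall>e'\<in>E. e \<noteq> e' \<longrightarrow> hp e e' = 0" and sp: "UNIV \<subseteq> vec.span E"
  shows "(\<Sum>e\<in>E. e$j * cnj (e$i)) = (if i = j then 1 else 0)"
proof -
  have hax: "hp (axis j 1) e = cnj (e$j)" for e :: "complex^'k"
    unfolding hp_def axis_def by (simp add: if01_mult)
  have "axis j (1::complex) = (\<Sum>e\<in>E. hp (axis j 1) e *s e)" by (rule onb_expand[OF assms])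
  then have "(axis j (1::complex))$i = (\<Sum>e\<in>E. cnj (e$j) * e$i)"
    by (metis (no_types, lifting) hax sum.cong sum_component vector_smult_component)
  then have "cnj ((axis j (1::complex))$i) = (\<Sum>e\<in>E. e$j * cnj (e$i))"
    by (simp add: cnj_sum mult.commute)
  then show ?thesis by (cases "i = j") (auto simp: axis_def)
qed

lemma trace_onb:
  fixes E :: "(complex^'k) set"
  assumes fin: "finite E" and nrm: "\<forall>e\<in>E. hp e e = 1"
    and orth: "\<forall>e\<in>E. \<forall>e'\<in>E. e \<noteq> e' \<longrightarrow> hp e e' = 0" and sp: "UNIV \<subseteq> vec.span E"
  shows "trace M = (\<Sum>e\<in>E. hp (M *v e) e)"
proof -
  have "(\<Sum>e\<in>E. hp (M *v e) e) = (\<Sum>e\<in>E. \<Sum>i\<in>UNIV. \<Sum>j\<in>UNIV. M$i$j * (e$j * cnj (e$i)))"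
    by (simp add: hp_def matrix_vector_mult_def sum_distrib_right mult.assoc)
  also have "\<dots> = (\<Sum>i\<in>UNIV. \<Sum>j\<in>UNIV. \<Sum>e\<in>E. M$i$j * (e$j * cnj (e$i)))"
    by (simp add: sum.swap[of _ E])
  also have "\<dots> = (\<Sum>i\<in>UNIV. \<Sum>j\<in>UNIV. M$i$j * (if i = j then 1 else 0))"
    by (simp add: sum_distrib_left[symmetric] onb_delta[OF assms])
  also have "\<dots> = trace M" by (simp add: trace_def if01_mult)
  finally show ?thesis ..
qed

lemma unitary_trace_id:
  fixes U :: "complex^'k^'k"
  assumes u: "unitary_mat U" and tr: "trace U = trace (mat 1 :: complex^'k^'k)"
  shows "U = mat 1"
proof -
  let ?d = "\<lambda>i j. (mat 1 :: complex^'k^'k)$i$j"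
  have d: "?d i j = (if i = j then 1 else 0)" for i j by (simp add: mat_def)
  have row: "(\<Sum>j\<in>UNIV. U$i$j * cnj (U$i$j)) = 1" for i
  proof -
    have "(U ** conj_transpose U)$i$i = 1" using u by (simp add: unitary_mat_def mat_def)
    then show ?thesis by (simp add: matrix_matrix_mult_def conj_transpose_def)
  qed
  have trn: "trace U = of_nat CARD('k)" using tr by (simp add: trace_I)
  have e: "(U$i$j - ?d i j) * cnj (U$i$j - ?d i j) =
      U$i$j * cnj (U$i$j) - (if i = j then U$i$j else 0) - (if i = j then cnj (U$i$j) else 0) + (if i = j then 1 else 0)" for i j
    by (simp add: d algebra_simps)
  have "(\<Sum>i\<in>UNIV. \<Sum>j\<in>UNIV. (U$i$j - ?d i j) * cnj (U$i$j - ?d i j)) =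
      (\<Sum>i\<in>UNIV. (\<Sum>j\<in>UNIV. U$i$j * cnj (U$i$j)) - U$i$i - cnj (U$i$i) + 1)"
    unfolding e by (simp add: sum.distrib sum_subtractf)
  also have "\<dots> = of_nat CARD('k) - trace U - cnj (trace U) + of_nat CARD('k)"
    by (simp add: row sum.distrib sum_subtractf trace_def cnj_sum sum_negf)
  also have "\<dots> = 0" by (simp add: trn)
  finally have z: "(\<Sum>i\<in>UNIV. \<Sum>j\<in>UNIV. (U$i$j - ?d i j) * cnj (U$i$j - ?d i j)) = 0" .
  have "(U$i$j - ?d i j) * cnj (U$i$j - ?d i j) = of_real ((cmod (U$i$j - ?d i j))^2)" for i j
    by (rule complex_norm_square[symmetric])
  then have "of_real (\<Sum>i\<in>UNIV. \<Sum>j\<in>UNIV. (cmod (U$i$j - ?d i j))^2) = (0::complex)"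
    using z by (simp add: of_real_sum)
  then have z2: "(\<Sum>i\<in>UNIV. \<Sum>j\<in>UNIV. (cmod (U$i$j - ?d i j))^2) = 0" by (rule of_real_eq_0_iff[THEN iffD1])
  have "(\<Sum>j\<in>UNIV. (cmod (U$i$j - ?d i j))^2) = 0" for i
    using z2 sum_nonneg_eq_0_iff[of UNIV "\<lambda>i. \<Sum>j\<in>UNIV. (cmod (U$i$j - ?d i j))^2"]
    by (simp add: sum_nonneg)
  then have "(cmod (U$i$j - ?d i j))^2 = 0" for i j
    using sum_nonneg_eq_0_iff[of UNIV "\<lambda>j. (cmod (U$i$j - ?d i j))^2"] by simp
  then have "U$i$j = ?d i j" for i j by simp
  then show ?thesis by (simp add: vec_eq_iff)
qed

definition ischar :: "(complex \<times> complex) set \<Rightarrow> (complex \<times> complex \<Rightarrow> complex) \<Rightarrow> bool" where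
  "ischar G ch \<longleftrightarrow> (\<forall>t\<in>G. \<forall>u\<in>G. ch (t + u) = ch t * ch u) \<and> ch 0 = 1 \<and> (\<forall>t. t \<notin> G \<longrightarrow> ch t = 0)"

lemma dedekind:
  assumes G0: "0 \<in> G" and Gadd: "\<forall>t\<in>G. \<forall>u\<in>G. t + u \<in> G"
  shows "finite Y \<Longrightarrow> \<forall>ch\<in>Y. ischar G ch \<Longrightarrow> \<forall>t\<in>G. (\<Sum>ch\<in>Y. c ch * ch t) = 0 \<Longrightarrow> \<forall>ch\<in>Y. c ch = 0"
proof (induction Y arbitrary: c rule: finite_induct)
  case empty
  then show ?case by simp
next
  case (insert ps Y)
  have chY: "\<forall>ch\<in>Y. ischar G ch" and chp: "ischar G ps" using insert.prems(1) by auto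
  have hyp: "(\<Sum>ch\<in>Y. c ch * ch t) = - (c ps * ps t)" if "t \<in> G" for t
    using insert.prems(2) that insert.hyps(1,2) by (simp add: eq_neg_iff_add_eq_0 add.commute)
  have cY: "c ch * (ch s - ps s) = 0" if "ch \<in> Y" "s \<in> G" for ch s
  proof -
    have "\<forall>t\<in>G. (\<Sum>ch\<in>Y. (c ch * (ch s - ps s)) * ch t) = 0"
    proof
      fix t assume t: "t \<in> G"
      have ts: "t + s \<in> G" using Gadd t \<open>s \<in> G\<close> by blast
      have "(\<Sum>ch\<in>Y. (c ch * (ch s - ps s)) * ch t) = (\<Sum>ch\<in>Y. c ch * ch (t + s)) - ps s * (\<Sum>ch\<in>Y. c ch * ch t)"
      proof -
        have "(\<Sum>ch\<in>Y. c ch * ch (t + s)) = (\<Sum>ch\<in>Y. c ch * (ch t * ch s))"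
          using chY t \<open>s \<in> G\<close> by (intro sum.cong refl) (simp add: ischar_def)
        then show ?thesis
          by (simp add: sum_distrib_left sum_subtractf algebra_simps)
      qed
      also have "\<dots> = - (c ps * ps (t + s)) + ps s * (c ps * ps t)"
        using hyp[OF ts] hyp[OF t] by simp
      also have "\<dots> = 0" using chp t \<open>s \<in> G\<close> by (simp add: ischar_def)
      finally show "(\<Sum>ch\<in>Y. (c ch * (ch s - ps s)) * ch t) = 0" .
    qed
    from insert.IH[OF chY this] that show ?thesis by blast
  qed
  have c0: "c ch = 0" if "ch \<in> Y" for ch
  proof -
    have "ch \<noteq> ps" using that insert.hyps(2) by blast
    then obtain s where s: "ch s \<noteq> ps s" by blast
    have "s \<in> G" using s chY that chp unfolding ischar_def by metis
    then show ?thesis using cY[OF that \<open>s \<in> G\<close>] s by simp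
  qed
  have "c ps = 0" using hyp[OF G0] c0 chp by (simp add: ischar_def)
  then show ?case using c0 by blast
qed

lemma sum_regroup:
  fixes f :: "'e \<Rightarrow> complex \<times> complex \<Rightarrow> complex"
  assumes "finite E" "finite Y" "f ` E \<subseteq> Y"
  shows "(\<Sum>ph\<in>Y. of_nat (card {e\<in>E. f e = ph}) * ph t) = (\<Sum>e\<in>E. f e t)"
proof -
  have "(\<Sum>e\<in>E. f e t) = (\<Sum>ph\<in>f ` E. \<Sum>e\<in>{e\<in>E. f e = ph}. f e t)"
    by (rule sum.image_gen[OF assms(1)])
  also have "\<dots> = (\<Sum>ph\<in>f ` E. of_nat (card {e\<in>E. f e = ph}) * ph t)"
    by (intro sum.cong refl) simp
  also have "\<dots> = (\<Sum>ph\<in>Y. of_nat (card {e\<in>E. f e = ph}) * ph t)"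
  proof (rule sum.mono_neutral_left[OF assms(2,3)], rule ballI)
    fix ph assume "ph \<in> Y - f ` E"
    then have "{e\<in>E. f e = ph} = {}" by blast
    then show "of_nat (card {e\<in>E. f e = ph}) * ph t = 0" by (metis card.empty mult_zero_left of_nat_0)
  qed
  finally show ?thesis ..
qed

lemma char_orbit:
  fixes chs :: "'e \<Rightarrow> complex \<times> complex \<Rightarrow> complex"
  assumes G0: "0 \<in> G" and Gadd: "\<forall>t\<in>G. \<forall>u\<in>G. t + u \<in> G"
    and fin: "finite E" and ch: "\<forall>e\<in>E. ischar G (chs e)" and hch: "\<forall>e\<in>E. ischar G (h (chs e))"
    and eq: "\<forall>t\<in>G. (\<Sum>e\<in>E. h (chs e) t) = (\<Sum>e\<in>E. chs e t)"
  shows "\<forall>e\<in>E. h (chs e) \<in> chs ` E"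
proof (rule ccontr)
  assume "\<not> ?thesis"
  then obtain e0 where e0: "e0 \<in> E" "h (chs e0) \<notin> chs ` E" by blast
  let ?Y = "chs ` E \<union> (\<lambda>e. h (chs e)) ` E"
  let ?c = "\<lambda>ph. of_nat (card {e\<in>E. chs e = ph}) - of_nat (card {e\<in>E. h (chs e) = ph}) :: complex"
  have fY: "finite ?Y" using fin by simp
  have "\<forall>t\<in>G. (\<Sum>ph\<in>?Y. ?c ph * ph t) = 0"
  proof
    fix t assume t: "t \<in> G"
    have "(\<Sum>ph\<in>?Y. ?c ph * ph t) = (\<Sum>ph\<in>?Y. of_nat (card {e\<in>E. chs e = ph}) * ph t)
        - (\<Sum>ph\<in>?Y. of_nat (card {e\<in>E. h (chs e) = ph}) * ph t)"
      by (simp add: left_diff_distrib sum_subtractf)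
    also have "\<dots> = (\<Sum>e\<in>E. chs e t) - (\<Sum>e\<in>E. h (chs e) t)"
      using sum_regroup[OF fin fY, of chs t] sum_regroup[OF fin fY, of "\<lambda>e. h (chs e)" t] by auto
    also have "\<dots> = 0" using eq t by simp
    finally show "(\<Sum>ph\<in>?Y. ?c ph * ph t) = 0" .
  qed
  moreover have "\<forall>ph\<in>?Y. ischar G ph" using ch hch by blast
  ultimately have "\<forall>ph\<in>?Y. ?c ph = 0" by (rule dedekind[OF G0 Gadd fY, rotated])
  then have "?c (h (chs e0)) = 0" using e0 by blast
  moreover have "{e\<in>E. chs e = h (chs e0)} = {}" using e0(2) by (metis (mono_tags, lifting) empty_Collect_eq image_eqI)
  moreover have "card {e\<in>E. h (chs e) = h (chs e0)} > 0" using e0 fin by (auto simp: card_gt_0_iff)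
  ultimately show False by simp
qed

lemma loc_facts:
  assumes sr: "subring_C B" and SB: "S \<subseteq> B" and mc: "mult_closed S" and S0: "0 \<notin> S"
  shows loc_nat: "of_nat m \<in> localization B S"
    and loc_add: "x \<in> localization B S \<Longrightarrow> y \<in> localization B S \<Longrightarrow> x + y \<in> localization B S"
    and loc_mult: "x \<in> localization B S \<Longrightarrow> y \<in> localization B S \<Longrightarrow> x * y \<in> localization B S"
    and loc_neg: "x \<in> localization B S \<Longrightarrow> - x \<in> localization B S"
proof -
  have B1: "1 \<in> B" and Bops: "\<forall>x\<in>B. \<forall>y\<in>B. x + y \<in> B \<and> x - y \<in> B \<and> x * y \<in> B"
    using sr by (auto simp: subring_C_def)
  have S1: "1 \<in> S" and Smul: "\<forall>x\<in>S. \<forall>y\<in>S. x * y \<in> S" using mc by (auto simp: mult_closed_def)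
  have B0: "0 \<in> B" using Bops B1 by force
  have Bn: "of_nat n \<in> B" for n
    by (induction n) (use B0 B1 Bops in auto)
  show "of_nat m \<in> localization B S"
    unfolding localization_def using Bn S1 by (intro CollectI exI[of _ "of_nat m"] exI[of _ 1]) auto
  show "x + y \<in> localization B S" if xy: "x \<in> localization B S" "y \<in> localization B S"
  proof -
    obtain b s b' s' where x: "x = b / s" "b \<in> B" "s \<in> S" and y: "y = b' / s'" "b' \<in> B" "s' \<in> S"
      using xy unfolding localization_def by blast
    have nz: "s \<noteq> 0" "s' \<noteq> 0" using x(3) y(3) S0 by auto
    have "x + y = (b * s' + b' * s) / (s * s')" using nz by (simp add: x y field_simps)
    moreover have "b * s' + b' * s \<in> B" using Bops x y SB by blast
    moreover have "s * s' \<in> S" using Smul x y by blast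
    ultimately show ?thesis unfolding localization_def by blast
  qed
  show "x * y \<in> localization B S" if xy: "x \<in> localization B S" "y \<in> localization B S"
  proof -
    obtain b s b' s' where x: "x = b / s" "b \<in> B" "s \<in> S" and y: "y = b' / s'" "b' \<in> B" "s' \<in> S"
      using xy unfolding localization_def by blast
    have "x * y = (b * b') / (s * s')" by (simp add: x y)
    moreover have "b * b' \<in> B" using Bops x y by blast
    moreover have "s * s' \<in> S" using Smul x y by blast
    ultimately show ?thesis unfolding localization_def by blast
  qed
  show "- x \<in> localization B S" if xy: "x \<in> localization B S"
  proof -
    obtain b s where x: "x = b / s" "b \<in> B" "s \<in> S"
      using xy unfolding localization_def by blast
    have "- x = (0 - b) / s" by (simp add: x)
    moreover have "0 - b \<in> B" using Bops B0 x by blast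
    ultimately show ?thesis using x unfolding localization_def by blast
  qed
qed

lemma pigeon_nat:
  assumes "finite (range (f :: nat \<Rightarrow> 'a))"
  shows "\<exists>a b. a < b \<and> f a = f b"
proof (rule ccontr)
  assume "\<not> ?thesis"
  then have "inj f" by (metis injI linorder_neqE_nat)
  then have "finite (UNIV :: nat set)" using assms finite_imageD by blast
  then show False by simp
qed

lemma char_nz:
  assumes "ischar G ch" "t \<in> G" "- t \<in> G"
  shows "ch t \<noteq> 0"
proof
  assume "ch t = 0"
  have "ch (t + - t) = ch t * ch (- t)" using assms unfolding ischar_def by blast
  then show False using assms(1) \<open>ch t = 0\<close> by (simp add: ischar_def)
qed

locale ring_set =
  fixes A :: "complex set"
  assumes An: "\<And>m. of_nat m \<in> A"
    and Aadd: "\<And>x y. x \<in> A \<Longrightarrow> y \<in> A \<Longrightarrow> x + y \<in> A"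
    and Amul: "\<And>x y. x \<in> A \<Longrightarrow> y \<in> A \<Longrightarrow> x * y \<in> A"
    and Aneg: "\<And>x. x \<in> A \<Longrightarrow> - x \<in> A"
begin

lemma A0: "0 \<in> A" using An[of 0] by simp

lemma period_up:
  assumes ch: "ischar (A \<times> A) ch" and ab: "a < b"
    and eq: "\<forall>y\<in>A. ch (of_nat a * y, y) = ch (of_nat b * y, y)"
  shows "\<forall>y\<in>A. ch (of_nat (b - a) * y, 0) = 1"
proof
  fix y assume y: "y \<in> A"
  have mul: "ch (of_nat m * y, y) = ch (of_nat m * y, 0) * ch (0, y)" for m
  proof -
    have "ch ((of_nat m * y, 0) + (0, y)) = ch (of_nat m * y, 0) * ch (0, y)"
      using ch y An Amul A0 unfolding ischar_def by blast
    then show ?thesis by simp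
  qed
  have nz0: "ch (0, y) \<noteq> 0" by (rule char_nz[OF ch]) (use y A0 Aneg in auto)
  have "ch (of_nat a * y, 0) = ch (of_nat b * y, 0)" using eq y mul nz0 by force
  moreover have "ch (of_nat b * y, 0) = ch (of_nat a * y, 0) * ch (of_nat (b - a) * y, 0)"
  proof -
    have "(of_nat b * y, 0) = (of_nat a * y, 0) + (of_nat (b - a) * y, (0::complex))"
      using ab by (simp add: of_nat_diff algebra_simps)
    then show ?thesis using ch y An Amul A0 unfolding ischar_def by (metis mem_Sigma_iff)
  qed
  moreover have "ch (of_nat a * y, 0) \<noteq> 0"
    by (rule char_nz[OF ch]) (use y A0 Aneg An Amul in auto)
  ultimately show "ch (of_nat (b - a) * y, 0) = 1" by simp
qed

lemma period_lo:
  assumes ch: "ischar (A \<times> A) ch" and ab: "a < b"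
    and eq: "\<forall>y\<in>A. ch (y, of_nat a * y) = ch (y, of_nat b * y)"
  shows "\<forall>y\<in>A. ch (0, of_nat (b - a) * y) = 1"
proof
  fix y assume y: "y \<in> A"
  have mul: "ch (y, of_nat m * y) = ch (y, 0) * ch (0, of_nat m * y)" for m
  proof -
    have "ch ((y, 0) + (0, of_nat m * y)) = ch (y, 0) * ch (0, of_nat m * y)"
      using ch y An Amul A0 unfolding ischar_def by blast
    then show ?thesis by simp
  qed
  have nz0: "ch (y, 0) \<noteq> 0" by (rule char_nz[OF ch]) (use y A0 Aneg in auto)
  have "ch (0, of_nat a * y) = ch (0, of_nat b * y)" using eq y mul nz0 by force
  moreover have "ch (0, of_nat b * y) = ch (0, of_nat a * y) * ch (0, of_nat (b - a) * y)"
  proof -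
    have "(0, of_nat b * y) = (0, of_nat a * y) + ((0::complex), of_nat (b - a) * y)"
      using ab by (simp add: of_nat_diff algebra_simps)
    then show ?thesis using ch y An Amul A0 unfolding ischar_def by (metis mem_Sigma_iff)
  qed
  moreover have "ch (0, of_nat a * y) \<noteq> 0"
    by (rule char_nz[OF ch]) (use y A0 Aneg An Amul in auto)
  ultimately show "ch (0, of_nat (b - a) * y) = 1" by simp
qed

end



lemma SL2_act_add: "SL2_act g (t + u) = SL2_act g t + SL2_act g u"
  by (cases g; cases t; cases u) (auto simp: algebra_simps)

lemma SL2_act_0: "SL2_act g 0 = 0"
proof -
  obtain a b c d where "g = ((a, b), (c, d))" by (metis prod.exhaust)
  then show ?thesis by (simp add: zero_prod_def)
qed

theorem lemma4p4:
  fixes K B S :: "complex set"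
    and \<mu> :: "complex \<times> complex \<Rightarrow> complex^'k^'k"
  assumes "number_field K"
    and "is_order K B"
    and "S \<subseteq> B" and "mult_closed S" and "0 \<notin> S"
    and unit: "\<forall>t \<in> localization B S \<times> localization B S. unitary_mat (\<mu> t)"
    and hom: "\<forall>t \<in> localization B S \<times> localization B S. \<forall>u \<in> localization B S \<times> localization B S.
                \<mu> (t + u) = \<mu> t ** \<mu> u"
    and inv: "\<forall>g \<in> SL2 (localization B S). \<forall>t \<in> localization B S \<times> localization B S.
                trace (\<mu> (SL2_act g t)) = trace (\<mu> t)"
  shows "\<exists>q::nat. q \<noteq> 0 \<and>
           (\<forall>x \<in> localization B S. \<forall>y \<in> localization B S. \<mu> (of_nat q * x, of_nat q * y) = mat 1)"
proof -
  define A where "A = localization B S"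
  have sr: "subring_C B" using assms(2) by (simp add: is_order_def)
  interpret ring_set A
    unfolding A_def by unfold_locales (rule loc_facts[OF sr assms(3,4,5)]; assumption)+
  define G where "G = A \<times> A"
  have G0: "0 \<in> G" using A0 by (simp add: G_def zero_prod_def)
  have Gadd: "\<forall>t\<in>G. \<forall>u\<in>G. t + u \<in> G" using Aadd by (auto simp: G_def)
  have Gneg: "\<And>t. t \<in> G \<Longrightarrow> - t \<in> G" using Aneg by (auto simp: G_def)
  have U: "\<And>t. t \<in> G \<Longrightarrow> unitary_mat (\<mu> t)" using unit unfolding G_def A_def by blast
  have H: "\<And>t u. t \<in> G \<Longrightarrow> u \<in> G \<Longrightarrow> \<mu> (t + u) = \<mu> t ** \<mu> u" using hom unfolding G_def A_def by blast
  have I: "\<And>g t. g \<in> SL2 A \<Longrightarrow> t \<in> G \<Longrightarrow> trace (\<mu> (SL2_act g t)) = trace (\<mu> t)"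
    using inv unfolding G_def A_def by blast
  have mu0: "\<mu> 0 = mat 1"
  proof -
    have "\<mu> 0 = \<mu> 0 ** \<mu> 0" using H[OF G0 G0] by simp
    then have "conj_transpose (\<mu> 0) ** \<mu> 0 = conj_transpose (\<mu> 0) ** (\<mu> 0 ** \<mu> 0)" by simp
    then show ?thesis using U[OF G0]
      by (simp add: unitary_mat_def matrix_mul_assoc matrix_mul_lid)
  qed
  have adjmu: "conj_transpose (\<mu> t) = \<mu> (- t)" if t: "t \<in> G" for t
  proof -
    have "\<mu> t ** \<mu> (- t) = mat 1" using H[OF t Gneg[OF t]] mu0 by simp
    then have "conj_transpose (\<mu> t) ** (\<mu> t ** \<mu> (- t)) = conj_transpose (\<mu> t)"
      by (simp add: matrix_mul_rid)
    then show ?thesis using U[OF t]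
      by (simp add: unitary_mat_def matrix_mul_assoc matrix_mul_lid)
  qed
  have commu: "\<mu> t ** \<mu> u = \<mu> u ** \<mu> t" if "t \<in> G" "u \<in> G" for t u
    using H[OF that] H[OF that(2,1)] by (simp add: add.commute)
  define F where "F = \<mu> ` G"
  have Fc: "\<forall>M\<in>F. \<forall>N\<in>F. M ** N = N ** M"
    unfolding F_def using commu by blast
  have Fa: "\<forall>M\<in>F. conj_transpose M \<in> F"
  proof
    fix M assume "M \<in> F"
    then obtain t where t: "t \<in> G" "M = \<mu> t" unfolding F_def by blast
    then have "conj_transpose M = \<mu> (- t)" using adjmu by simp
    then show "conj_transpose M \<in> F" unfolding F_def using Gneg[OF t(1)] by blast
  qed
  have "\<exists>E. finite E \<and> E \<subseteq> UNIV \<and> (\<forall>e\<in>E. hp e e = 1) \<and> (\<forall>e\<in>E. \<forall>e'\<in>E. e \<noteq> e' \<longrightarrow> hp e e' = 0)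
        \<and> (\<forall>e\<in>E. jeig F e) \<and> UNIV \<subseteq> vec.span E"
    by (rule onb[OF Fc Fa vec.subspace_UNIV]) simp
  then obtain E where E: "finite E" "\<forall>e\<in>E. hp e e = 1" "\<forall>e\<in>E. \<forall>e'\<in>E. e \<noteq> e' \<longrightarrow> hp e e' = 0"
      "\<forall>e\<in>E. jeig F e" "UNIV \<subseteq> vec.span E"
    by blast
  define chs where "chs e = (\<lambda>t. if t \<in> G then hp (\<mu> t *v e) e else 0)" for e
  have eig: "\<mu> t *v e = chs e t *s e" if e: "e \<in> E" and t: "t \<in> G" for e t
  proof -
    obtain l where l: "\<mu> t *v e = l *s e" using E(4) e t unfolding jeig_def F_def by blast
    have "chs e t = l" using t e E(2) by (simp add: chs_def l hp_scale_left)
    then show ?thesis using l by simp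
  qed
  have ischs: "ischar G (chs e)" if e: "e \<in> E" for e
    unfolding ischar_def
  proof (intro conjI ballI allI impI)
    fix t u assume t: "t \<in> G" and u: "u \<in> G"
    have "\<mu> (t + u) *v e = \<mu> t *v (\<mu> u *v e)" using H[OF t u] by (simp add: matrix_vector_mul_assoc)
    also have "\<dots> = (chs e t * chs e u) *s e" using eig[OF e t] eig[OF e u] by (simp add: vec.scale mult.commute)
    finally have "\<mu> (t + u) *v e = (chs e t * chs e u) *s e" .
    then show "chs e (t + u) = chs e t * chs e u"
      using Gadd t u e E(2) by (simp add: chs_def hp_scale_left)
  next
    show "chs e 0 = 1" using G0 e E(2) by (simp add: chs_def mu0)
  next
    fix t assume "t \<notin> G" then show "chs e t = 0" by (simp add: chs_def)
  qed
  have trace_chs: "trace (\<mu> t) = (\<Sum>e\<in>E. chs e t)" if t: "t \<in> G" for t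
    using trace_onb[OF E(1,2,3,5), of "\<mu> t"] t by (simp add: chs_def)
  define act where "act g ch = (\<lambda>t. if t \<in> G then ch (SL2_act g t) else (0::complex))" for g ch
  have orbit: "\<forall>e\<in>E. act g (chs e) \<in> chs ` E" if g: "g \<in> SL2 A" for g
  proof -
    have gG: "SL2_act g t \<in> G" if "t \<in> G" for t
      using g that by (cases g; cases t) (auto simp: SL2_def G_def intro!: Aadd Amul)
    have hch: "\<forall>e\<in>E. ischar G (act g (chs e))"
    proof
      fix e assume e: "e \<in> E"
      show "ischar G (act g (chs e))"
        unfolding ischar_def
      proof (intro conjI ballI allI impI)
        fix t u assume t: "t \<in> G" and u: "u \<in> G"
        show "act g (chs e) (t + u) = act g (chs e) t * act g (chs e) u"
          using ischs[OF e] gG[OF t] gG[OF u] Gadd t u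
          by (simp add: act_def SL2_act_add ischar_def)
      next
        show "act g (chs e) 0 = 1" using G0 ischs[OF e] by (simp add: act_def SL2_act_0 ischar_def)
      next
        fix t assume "t \<notin> G" then show "act g (chs e) t = 0" by (simp add: act_def)
      qed
    qed
    have eq: "\<forall>t\<in>G. (\<Sum>e\<in>E. act g (chs e) t) = (\<Sum>e\<in>E. chs e t)"
    proof
      fix t assume t: "t \<in> G"
      have "(\<Sum>e\<in>E. act g (chs e) t) = (\<Sum>e\<in>E. chs e (SL2_act g t))" using t by (simp add: act_def)
      also have "\<dots> = trace (\<mu> (SL2_act g t))" using trace_chs[OF gG[OF t]] by simp
      also have "\<dots> = trace (\<mu> t)" using I[OF g t] .
      also have "\<dots> = (\<Sum>e\<in>E. chs e t)" using trace_chs[OF t] .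
      finally show "(\<Sum>e\<in>E. act g (chs e) t) = (\<Sum>e\<in>E. chs e t)" .
    qed
    show ?thesis using char_orbit[OF G0 Gadd E(1) _ hch eq] ischs by blast
  qed
  have upS: "((1, of_nat m), (0, 1)) \<in> SL2 A" for m using An[of 1] An[of 0] An[of m] by (simp add: SL2_def)
  have loS: "((1, 0), (of_nat m, 1)) \<in> SL2 A" for m using An[of 1] An[of 0] An[of m] by (simp add: SL2_def)
  have per: "\<exists>Q>0. \<forall>y\<in>A. chs e (of_nat Q * y, 0) = 1 \<and> chs e (0, of_nat Q * y) = 1" if e: "e \<in> E" for e
  proof -
    have GA: "G = A \<times> A" by (simp add: G_def)
    have chA: "ischar (A \<times> A) (chs e)" using ischs[OF e] by (simp add: G_def)
    obtain a b where ab: "a < b" "act ((1, of_nat a), (0, 1)) (chs e) = act ((1, of_nat b), (0, 1)) (chs e)"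
      using pigeon_nat[of "\<lambda>m. act ((1, of_nat m), (0, 1)) (chs e)"] orbit[OF upS] e E(1)
      by (metis (no_types, lifting) finite_imageI finite_subset image_subsetI)
    have "\<forall>y\<in>A. chs e (of_nat a * y, y) = chs e (of_nat b * y, y)"
    proof
      fix y assume y: "y \<in> A"
      have "(0, y) \<in> G" using y A0 by (simp add: G_def)
      then show "chs e (of_nat a * y, y) = chs e (of_nat b * y, y)"
        using fun_cong[OF ab(2), of "(0, y)"] by (simp add: act_def)
    qed
    from period_up[OF chA ab(1) this] have p1: "\<forall>y\<in>A. chs e (of_nat (b - a) * y, 0) = 1" .
    obtain c d where cd: "c < d" "act ((1, 0), (of_nat c, 1)) (chs e) = act ((1, 0), (of_nat d, 1)) (chs e)"
      using pigeon_nat[of "\<lambda>m. act ((1, 0), (of_nat m, 1)) (chs e)"] orbit[OF loS] e E(1)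
      by (metis (no_types, lifting) finite_imageI finite_subset image_subsetI)
    have "\<forall>y\<in>A. chs e (y, of_nat c * y) = chs e (y, of_nat d * y)"
    proof
      fix y assume y: "y \<in> A"
      have "(y, 0) \<in> G" using y A0 by (simp add: G_def)
      then show "chs e (y, of_nat c * y) = chs e (y, of_nat d * y)"
        using fun_cong[OF cd(2), of "(y, 0)"] by (simp add: act_def)
    qed
    from period_lo[OF chA cd(1) this] have p2: "\<forall>y\<in>A. chs e (0, of_nat (d - c) * y) = 1" .
    let ?Q = "(b - a) * (d - c)"
    have "?Q > 0" using ab(1) cd(1) by simp
    moreover have "\<forall>y\<in>A. chs e (of_nat ?Q * y, 0) = 1 \<and> chs e (0, of_nat ?Q * y) = 1"
    proof
      fix y assume y: "y \<in> A"
      have y1: "of_nat (d - c) * y \<in> A" "of_nat (b - a) * y \<in> A" using y An Amul by auto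
      have "chs e (of_nat ?Q * y, 0) = 1" using p1 y1(1) by (simp add: mult.assoc)
      moreover have "chs e (0, of_nat ?Q * y) = 1" using p2 y1(2) by (simp add: mult.assoc mult.commute[of "of_nat (b - a)"])
      ultimately show "chs e (of_nat ?Q * y, 0) = 1 \<and> chs e (0, of_nat ?Q * y) = 1" ..
    qed
    ultimately show ?thesis by blast
  qed
  then obtain Q where Q: "\<forall>e\<in>E. Q e > 0 \<and> (\<forall>y\<in>A. chs e (of_nat (Q e) * y, 0) = 1 \<and> chs e (0, of_nat (Q e) * y) = 1)"
    by metis
  define q where "q = (\<Prod>e\<in>E. Q e)"
  have q0: "q \<noteq> 0" using Q E(1) by (simp add: q_def)
  have qone: "chs e (of_nat q * x, of_nat q * y) = 1" if e: "e \<in> E" and x: "x \<in> A" and y: "y \<in> A" for e x y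
  proof -
    obtain r where r: "q = Q e * r" using e E(1) unfolding q_def by (metis dvd_prod_eqI dvdE)
    have rx: "of_nat r * x \<in> A" "of_nat r * y \<in> A" using x y An Amul by auto
    have "chs e (of_nat q * x, 0) = 1" using Q e rx(1) by (simp add: r mult.assoc)
    moreover have "chs e (0, of_nat q * y) = 1" using Q e rx(2) by (simp add: r mult.assoc)
    moreover have "chs e ((of_nat q * x, 0) + (0, of_nat q * y)) = chs e (of_nat q * x, 0) * chs e (0, of_nat q * y)"
      using ischs[OF e] x y An Amul A0 unfolding ischar_def G_def by blast
    ultimately show ?thesis by simp
  qed
  show ?thesis
  proof (intro exI[of _ q] conjI q0 ballI)
    fix x y assume x: "x \<in> localization B S" and y: "y \<in> localization B S"
    have t: "(of_nat q * x, of_nat q * y) \<in> G" using x y An Amul by (auto simp: G_def A_def)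
    have "trace (\<mu> (of_nat q * x, of_nat q * y)) = (\<Sum>e\<in>E. 1)"
      using trace_chs[OF t] qone x y by (simp add: A_def)
    also have "\<dots> = (\<Sum>e\<in>E. chs e 0)" using ischs by (simp add: ischar_def)
    also have "\<dots> = trace (mat 1 :: complex^'k^'k)" using trace_chs[OF G0] mu0 by simp
    finally show "\<mu> (of_nat q * x, of_nat q * y) = mat 1"
      by (rule unitary_trace_id[OF U[OF t]])
  qed
qed

end
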